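(* Let $X=-x\,f'(y)\frac{\partial}{\partial x}+f(y)\frac{\partial}{\partial y}$ be (the germ at the origin of) a smooth vector field on $\mathbb{R}^2$ with $f$ smooth, and suppose $X(0,0)=0$, i.e. $f(0)=0$. Then the eigenvalues of the linearization $DX(0,0)$ are $-f'(0)$ and $f'(0)$; hence the origin is a hyperbolic singularity of $X$ if and only if $f'(0)\neq 0$. In that case, with $a=f'(0)$, there is a germ at the origin of a smooth diffeomorphism $\psi$ of $(\mathbb{R}^2,0)$ with $\psi^*(x\,dy)=x\,dy$ and $$\psi_*X=-ax\frac{\partial}{\partial x}+ay\frac{\partial}{\partial y}$$ near the origin.
   Context: Coordinates $(x,y)$ on $\mathbb{R}^2$; $x\,dy$ is the Liouville form. The vector fields of this form are exactly the smooth vector fields preserving $x\,dy$. A zero $p$ of a vector field is hyperbolic if $DX(p)$ has no eigenvalue with zero real part. $\psi_*$ denotes pushforward of vector fields and $\psi^*$ pullback of forms. "Smooth" means $C^\infty$. *)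

theory Defs
  imports "HOL-Analysis.Analysis"
begin

text \<open>C^k and C^infinity on a set (intended for open sets), via iterated
  directional (Frechet) derivatives, which must exist and be continuous.\<close>
fun Ck_on :: "nat \<Rightarrow> 'a::real_normed_vector set \<Rightarrow> ('a \<Rightarrow> 'b::real_normed_vector) \<Rightarrow> bool" where
  "Ck_on 0 U g = continuous_on U g"
| "Ck_on (Suc n) U g =
     ((\<forall>x\<in>U. g differentiable (at x)) \<and>
      (\<forall>v. Ck_on n U (\<lambda>x. frechet_derivative g (at x) v)))"

definition smooth_on :: "'a::real_normed_vector set \<Rightarrow> ('a \<Rightarrow> 'b::real_normed_vector) \<Rightarrow> bool" where
  "smooth_on U g \<longleftrightarrow> (\<forall>n. Ck_on n U g)"

text \<open>Complex eigenvalues of a real linear map L of R^2 (given as a function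
  on real*real), i.e. of its matrix with columns L(1,0) and L(0,1).\<close>
definition lin_eigenvalues :: "(real \<times> real \<Rightarrow> real \<times> real) \<Rightarrow> complex set" where
  "lin_eigenvalues L = {\<mu>. \<exists>v1 v2. (v1, v2) \<noteq> (0, 0) \<and>
      complex_of_real (fst (L (1,0))) * v1 + complex_of_real (fst (L (0,1))) * v2 = \<mu> * v1 \<and>
      complex_of_real (snd (L (1,0))) * v1 + complex_of_real (snd (L (0,1))) * v2 = \<mu> * v2}"

definition hyperbolic_zero :: "(real \<times> real \<Rightarrow> real \<times> real) \<Rightarrow> real \<times> real \<Rightarrow> bool" where
  "hyperbolic_zero X p \<longleftrightarrow> X p = (0, 0) \<and> X differentiable (at p) \<and>
     (\<forall>\<mu>\<in>lin_eigenvalues (frechet_derivative X (at p)). Re \<mu> \<noteq> 0)"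

definition liouville_field :: "(real \<Rightarrow> real) \<Rightarrow> real \<times> real \<Rightarrow> real \<times> real" where
  "liouville_field f p = (- fst p * deriv f (snd p), f (snd p))"

end

theory Submission
  imports Defs
begin

lemma frechet_eq_of_has:
  "(f has_derivative f') (at x) \<Longrightarrow> frechet_derivative f (at x) = f'"
  using frechet_derivative_at by metis

lemma Ck_on_cong:
  assumes "open U"
  shows "Ck_on n U f \<Longrightarrow> (\<forall>x\<in>U. f x = g x) \<Longrightarrow> Ck_on n U g"
proof (induction n arbitrary: f g)
  case 0
  then show ?case using continuous_on_cong by force
next
  case (Suc n)
  have dg: "(g has_derivative frechet_derivative f (at x)) (at x)" if "x \<in> U" for x
    using Suc.prems that assms frechet_derivative_works
    by (metis Ck_on.simps(2) has_derivative_transform_within_open)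
  have eq: "frechet_derivative g (at x) = frechet_derivative f (at x)" if "x \<in> U" for x
    using dg[OF that] frechet_eq_of_has by blast
  have "Ck_on n U (\<lambda>x. frechet_derivative g (at x) v)" for v
    using Suc.IH[of "\<lambda>x. frechet_derivative f (at x) v" "\<lambda>x. frechet_derivative g (at x) v"] Suc.prems eq
    by auto
  then show ?case
    using dg by (auto simp: differentiable_def)
qed

lemma Ck_on_pair:
  assumes "open U"
  shows "Ck_on n U f \<Longrightarrow> Ck_on n U g \<Longrightarrow> Ck_on n U (\<lambda>x. (f x, g x))"
proof (induction n arbitrary: f g)
  case 0
  then show ?case by (auto intro: continuous_on_Pair)
next
  case (Suc n)
  have d: "((\<lambda>x. (f x, g x)) has_derivative (\<lambda>v. (frechet_derivative f (at x) v, frechet_derivative g (at x) v))) (at x)"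
    if "x \<in> U" for x
  proof -
    have "f differentiable at x" "g differentiable at x" using Suc.prems that by auto
    then show ?thesis unfolding frechet_derivative_works by (rule has_derivative_Pair)
  qed
  have "Ck_on n U (\<lambda>x. frechet_derivative (\<lambda>x. (f x, g x)) (at x) v)" for v
  proof -
    have "Ck_on n U (\<lambda>x. (frechet_derivative f (at x) v, frechet_derivative g (at x) v))"
      using Suc.IH Suc.prems by auto
    moreover have "\<forall>x\<in>U. (frechet_derivative f (at x) v, frechet_derivative g (at x) v) = frechet_derivative (\<lambda>x. (f x, g x)) (at x) v"
      using frechet_eq_of_has[OF d] by auto
    ultimately show ?thesis
      by (rule Ck_on_cong[OF assms])
  qed
  then show ?case using d by (auto simp: differentiable_def)
qed

fun D1 :: "nat \<Rightarrow> real set \<Rightarrow> (real \<Rightarrow> real) \<Rightarrow> bool" where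
  "D1 0 U f = True"
| "D1 (Suc n) U f = ((\<forall>x\<in>U. f differentiable (at x)) \<and> D1 n U (deriv f))"

definition sm :: "real set \<Rightarrow> (real \<Rightarrow> real) \<Rightarrow> bool" where
  "sm U f \<longleftrightarrow> (\<forall>n. D1 n U f)"

lemma deriv_eq_on:
  assumes "open U" "x \<in> U" "\<forall>x\<in>U. f x = g x" "(f has_real_derivative D) (at x)"
  shows "(g has_real_derivative D) (at x)" "deriv g x = D"
proof -
  show g: "(g has_real_derivative D) (at x)"
    using assms has_field_derivative_transform_within_open by blast
  then show "deriv g x = D" by (rule DERIV_imp_deriv)
qed

lemma D1_cong:
  assumes "open U"
  shows "D1 n U f \<Longrightarrow> (\<forall>x\<in>U. f x = g x) \<Longrightarrow> D1 n U g"
proof (induction n arbitrary: f g)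
  case 0
  then show ?case by simp
next
  case (Suc n)
  have dg: "(g has_real_derivative deriv f x) (at x)" "deriv g x = deriv f x" if "x \<in> U" for x
    using deriv_eq_on[OF assms that Suc.prems(2)] Suc.prems(1) that
    by (auto simp: DERIV_deriv_iff_real_differentiable)
  then show ?case using Suc by (auto simp: real_differentiable_def)
qed

lemma D1_SucI:
  assumes "open U" "\<And>x. x \<in> U \<Longrightarrow> (f has_real_derivative f' x) (at x)" "D1 n U f'"
  shows "D1 (Suc n) U f"
proof -
  have "deriv f x = f' x" if "x \<in> U" for x using assms(2)[OF that] DERIV_imp_deriv by blast
  then have "D1 n U (deriv f)" using D1_cong[OF assms(1) assms(3)] by auto
  then show ?thesis using assms(2) by (auto simp: real_differentiable_def)
qed

lemma D1_mono: "D1 (Suc n) U f \<Longrightarrow> D1 n U f"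
  by (induction n arbitrary: f) auto

lemma D1_le_aux: "D1 (m + k) U f \<Longrightarrow> D1 m U f"
proof (induction k)
  case (Suc k) then show ?case by (metis D1_mono add_Suc_right)
qed simp

lemma D1_le: "m \<le> n \<Longrightarrow> D1 n U f \<Longrightarrow> D1 m U f"
  using D1_le_aux by (metis le_add_diff_inverse)

lemma D1_diff: "D1 (Suc n) U f \<Longrightarrow> x \<in> U \<Longrightarrow> (f has_real_derivative deriv f x) (at x)"
  by (auto simp: DERIV_deriv_iff_real_differentiable)

lemma sm_diff: "sm U f \<Longrightarrow> x \<in> U \<Longrightarrow> (f has_real_derivative deriv f x) (at x)"
  unfolding sm_def using D1_diff by blast

lemma sm_deriv: "sm U f \<Longrightarrow> sm U (deriv f)"
  unfolding sm_def by (metis D1.simps(2))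

lemma sm_cont: "sm U f \<Longrightarrow> continuous_on U f"
  using sm_diff by (meson DERIV_isCont continuous_at_imp_continuous_on)

lemma sm_cong: "open U \<Longrightarrow> sm U f \<Longrightarrow> (\<forall>x\<in>U. f x = g x) \<Longrightarrow> sm U g"
  unfolding sm_def using D1_cong by blast

lemma sm_subset: "V \<subseteq> U \<Longrightarrow> sm U f \<Longrightarrow> sm V f"
proof -
  have "V \<subseteq> U \<Longrightarrow> D1 n U f \<Longrightarrow> D1 n V f" for n
    by (induction n arbitrary: f) auto
  then show "V \<subseteq> U \<Longrightarrow> sm U f \<Longrightarrow> sm V f" unfolding sm_def by blast
qed

lemma D1_const: "open U \<Longrightarrow> D1 n U (\<lambda>x. c)"
proof (induction n arbitrary: c)
  case (Suc n)
  have "((\<lambda>x. c) has_real_derivative 0) (at x)" for x by (rule DERIV_const)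
  then show ?case using D1_SucI[OF Suc.prems, of "\<lambda>x. c" "\<lambda>x. 0" n] Suc.IH[OF Suc.prems] by blast
qed simp

lemma D1_id: "open U \<Longrightarrow> D1 n U (\<lambda>x. x)"
proof (cases n)
  case (Suc m)
  assume U: "open U"
  have "((\<lambda>x. x) has_real_derivative 1) (at x)" for x by (rule DERIV_ident)
  then show ?thesis using Suc D1_SucI[OF U, of "\<lambda>x. x" "\<lambda>x. 1" m] D1_const[OF U] by blast
qed simp

lemma D1_add: "open U \<Longrightarrow> D1 n U f \<Longrightarrow> D1 n U g \<Longrightarrow> D1 n U (\<lambda>x. f x + g x)"
proof (induction n arbitrary: f g)
  case (Suc n)
  have "D1 n U (\<lambda>x. deriv f x + deriv g x)" using Suc.IH Suc.prems by simp
  moreover have "((\<lambda>x. f x + g x) has_real_derivative deriv f x + deriv g x) (at x)" if "x \<in> U" for x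
    by (rule DERIV_add[OF D1_diff[OF Suc.prems(2) that] D1_diff[OF Suc.prems(3) that]])
  ultimately show ?case by (rule D1_SucI[OF Suc.prems(1), rotated])
qed simp

lemma D1_mult: "open U \<Longrightarrow> D1 n U f \<Longrightarrow> D1 n U g \<Longrightarrow> D1 n U (\<lambda>x. f x * g x)"
proof (induction n arbitrary: f g)
  case (Suc n)
  have "D1 n U f" "D1 n U g" using Suc.prems(2,3) D1_mono by blast+
  moreover have "D1 n U (deriv f)" "D1 n U (deriv g)" using Suc.prems(2,3) by simp_all
  ultimately have "D1 n U (\<lambda>x. deriv f x * g x)" "D1 n U (\<lambda>x. deriv g x * f x)"
    using Suc.IH Suc.prems(1) by blast+
  then have "D1 n U (\<lambda>x. deriv f x * g x + deriv g x * f x)" using D1_add Suc.prems(1) by blast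
  moreover have "((\<lambda>x. f x * g x) has_real_derivative deriv f x * g x + deriv g x * f x) (at x)" if "x \<in> U" for x
    by (rule DERIV_mult[OF D1_diff[OF Suc.prems(2) that] D1_diff[OF Suc.prems(3) that]])
  ultimately show ?case by (rule D1_SucI[OF Suc.prems(1), rotated])
qed simp

lemma D1_comp:
  assumes "open U" "open V" "f ` U \<subseteq> V"
  shows "D1 n V g \<Longrightarrow> D1 n U f \<Longrightarrow> D1 n U (\<lambda>x. g (f x))"
  using assms(3)
proof (induction n arbitrary: g)
  case (Suc n)
  have "D1 n U f" using Suc.prems(2) D1_mono by blast
  then have "D1 n U (\<lambda>x. deriv g (f x) * deriv f x)"
    using Suc assms by (intro D1_mult) auto
  then show ?case
  proof (intro D1_SucI[OF assms(1)])
    fix x assume x: "x \<in> U"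
    have fx: "f x \<in> V" using Suc.prems(3) x by auto
    show "((\<lambda>x. g (f x)) has_real_derivative deriv g (f x) * deriv f x) (at x)"
      by (rule DERIV_chain2[OF D1_diff[OF Suc.prems(1) fx] D1_diff[OF Suc.prems(2) x]])
  qed
qed simp

lemma D1_inverse: "D1 n (-{0}) inverse"
proof (induction n)
  case (Suc n)
  have o: "open (-{0::real})" by auto
  have "D1 n (- {0}) (\<lambda>x. (-1) * (inverse x * inverse x))"
    using D1_mult[OF o D1_const[OF o] D1_mult[OF o Suc Suc]] .
  moreover have "(inverse has_real_derivative (-1) * (inverse x * inverse x)) (at x)" if "x \<in> -{0}" for x
    using DERIV_inverse[of x] that by (simp add: power2_eq_square)
  ultimately show ?case by (rule D1_SucI[OF o, rotated])
qed simp

lemma D1_exp: "D1 n UNIV exp"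
proof (induction n)
  case (Suc n)
  have "(exp has_real_derivative exp x) (at x)" for x by (rule DERIV_exp)
  then show ?case using D1_SucI[OF open_UNIV, of exp exp n] Suc by blast
qed simp

lemma sm_const: "open U \<Longrightarrow> sm U (\<lambda>x. c)" by (simp add: sm_def D1_const)
lemma sm_id: "open U \<Longrightarrow> sm U (\<lambda>x. x)" by (simp add: sm_def D1_id)
lemma sm_add: "open U \<Longrightarrow> sm U f \<Longrightarrow> sm U g \<Longrightarrow> sm U (\<lambda>x. f x + g x)" by (simp add: sm_def D1_add)
lemma sm_mult: "open U \<Longrightarrow> sm U f \<Longrightarrow> sm U g \<Longrightarrow> sm U (\<lambda>x. f x * g x)" by (simp add: sm_def D1_mult)
lemma sm_cmult: "open U \<Longrightarrow> sm U f \<Longrightarrow> sm U (\<lambda>x. c * f x)" by (simp add: sm_mult sm_const)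
lemma sm_diffop: "open U \<Longrightarrow> sm U f \<Longrightarrow> sm U g \<Longrightarrow> sm U (\<lambda>x. f x - g x)"
  using sm_add[of U f "\<lambda>x. (-1) * g x"] sm_cmult[of U g "-1"] by simp
lemma sm_comp: "open U \<Longrightarrow> open V \<Longrightarrow> f ` U \<subseteq> V \<Longrightarrow> sm V g \<Longrightarrow> sm U f \<Longrightarrow> sm U (\<lambda>x. g (f x))"
  by (simp add: sm_def D1_comp)
lemma sm_exp: "open U \<Longrightarrow> sm U f \<Longrightarrow> sm U (\<lambda>x. exp (f x))"
  using sm_comp[of U UNIV f exp] D1_exp by (simp add: sm_def)
lemma sm_inverse: "open U \<Longrightarrow> sm U f \<Longrightarrow> (\<forall>x\<in>U. f x \<noteq> 0) \<Longrightarrow> sm U (\<lambda>x. inverse (f x))"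
proof -
  assume a: "open U" "sm U f" "\<forall>x\<in>U. f x \<noteq> 0"
  then have "f ` U \<subseteq> -{0}" by auto
  then show ?thesis using sm_comp[of U "-{0}" f inverse] D1_inverse a unfolding sm_def by blast
qed

lemma frechet_real:
  fixes f :: "real \<Rightarrow> real"
  assumes "f differentiable (at x)"
  shows "frechet_derivative f (at x) = (\<lambda>v. deriv f x * v)"
  using assms DERIV_deriv_iff_real_differentiable frechet_eq_of_has
  by (metis has_field_derivative_def mult.commute)

lemma Ck_on_D1:
  fixes f :: "real \<Rightarrow> real"
  assumes "open U"
  shows "Ck_on n U f \<Longrightarrow> D1 n U f"
proof (induction n arbitrary: f)
  case (Suc n)
  then have "Ck_on n U (\<lambda>x. frechet_derivative f (at x) 1)" by simp
  then have "Ck_on n U (deriv f)"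
    by (rule Ck_on_cong[OF assms]) (use Suc.prems frechet_real in auto)
  then show ?case using Suc by auto
qed simp

lemma smooth_sm: "open U \<Longrightarrow> smooth_on U (f::real\<Rightarrow>real) \<Longrightarrow> sm U f"
  unfolding smooth_on_def sm_def using Ck_on_D1 by blast

definition J :: "nat \<Rightarrow> (real \<Rightarrow> real) \<Rightarrow> real \<Rightarrow> real" where
  "J m \<phi> y = integral {0..1} (\<lambda>t. t^m * \<phi> (t*y))"

lemma scale_in_I:
  fixes R y :: real
  assumes "y \<in> {-R<..<R}" "t \<in> {0..1::real}" shows "t * y \<in> {-R<..<R}"
proof -
  have "\<bar>t*y\<bar> \<le> \<bar>y\<bar>" using assms(2) by (auto simp: abs_mult intro: mult_left_le_one_le)
  then show ?thesis using assms(1) by auto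
qed

lemma cont_scale:
  fixes R y :: real
  assumes "continuous_on {-R<..<R} \<phi>" "y \<in> {-R<..<R}"
  shows "continuous_on {0..1} (\<lambda>t. \<phi> (t*y))"
  by (rule continuous_on_compose2[OF assms(1)]) (use scale_in_I[OF assms(2)] in \<open>auto intro!: continuous_intros\<close>)

lemma J_deriv:
  fixes R y :: real
  assumes "sm {-R<..<R} \<phi>" "y \<in> {-R<..<R}"
  shows "(J m \<phi> has_real_derivative J (Suc m) (deriv \<phi>) y) (at y)"
proof -
  let ?I = "{-R<..<R}"
  have cd: "continuous_on ?I (deriv \<phi>)" using sm_cont[OF sm_deriv[OF assms(1)]] .
  have c: "continuous_on ?I \<phi>" using sm_cont[OF assms(1)] .
  have "((\<lambda>y. integral (cbox 0 1) (\<lambda>t. t^m * \<phi> (t*y))) has_field_derivative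
          integral (cbox 0 1) (\<lambda>t. t^Suc m * deriv \<phi> (t*y))) (at y within ?I)"
  proof (rule leibniz_rule_field_derivative)
    fix x t assume x: "x \<in> ?I" and t: "t \<in> cbox (0::real) 1"
    then have tx: "t * x \<in> ?I" using scale_in_I by auto
    have "((\<lambda>x. t^m * \<phi> (t*x)) has_field_derivative t^m * (deriv \<phi> (t*x) * t)) (at x)"
      by (intro DERIV_cmult DERIV_chain2[of \<phi>] sm_diff[OF assms(1) tx]) (auto intro!: derivative_eq_intros)
    then show "((\<lambda>x. t^m * \<phi> (t*x)) has_field_derivative t^Suc m * deriv \<phi> (t*x)) (at x within ?I)"
      by (auto intro: has_field_derivative_at_within simp: algebra_simps)
  next
    fix x assume "x \<in> ?I"
    then show "(\<lambda>t. t^m * \<phi> (t*x)) integrable_on cbox 0 1"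
      using cont_scale[OF c] by (auto intro!: integrable_continuous_real continuous_intros)
  next
    have "continuous_on (?I \<times> cbox 0 1) (\<lambda>p. deriv \<phi> (snd p * fst p))"
      by (rule continuous_on_compose2[OF cd]) (auto intro!: continuous_intros scale_in_I)
    then show "continuous_on (?I \<times> cbox 0 1) (\<lambda>(x, t). t^Suc m * deriv \<phi> (t*x))"
      by (auto simp: case_prod_beta intro!: continuous_intros)
  qed (insert assms(2), auto)
  then have "(J m \<phi> has_real_derivative J (Suc m) (deriv \<phi>) y) (at y within ?I)"
    unfolding J_def cbox_interval .
  then show ?thesis using at_within_open[OF assms(2) open_greaterThanLessThan] by simp
qed

lemma sm_J: "sm {-R<..<R} \<phi> \<Longrightarrow> sm {-R<..<R} (J m \<phi>)"
proof -
  have "sm {-R<..<R} \<phi> \<Longrightarrow> D1 n {-R<..<R} (J m \<phi>)" for n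
  proof (induction n arbitrary: m \<phi>)
    case (Suc n)
    show ?case
      by (rule D1_SucI[where f'="J (Suc m) (deriv \<phi>)"]) (use Suc sm_deriv J_deriv in auto)
  qed simp
  then show "sm {-R<..<R} \<phi> \<Longrightarrow> sm {-R<..<R} (J m \<phi>)" unfolding sm_def by blast
qed

lemma hadamard:
  fixes R y :: real
  assumes "sm {-R<..<R} \<phi>" "y \<in> {-R<..<R}"
  shows "\<phi> y - \<phi> 0 = y * J 0 (deriv \<phi>) y"
proof -
  let ?I = "{-R<..<R}"
  have ftc: "((\<lambda>t. deriv \<phi> (t*y) * y) has_integral (\<phi> (1*y) - \<phi> (0*y))) {0..1}"
  proof (rule fundamental_theorem_of_calculus)
    fix t assume "t \<in> {0..1::real}"
    then have ty: "t*y \<in> ?I" using scale_in_I[OF assms(2)] by auto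
    have "((\<lambda>t. \<phi> (t*y)) has_real_derivative deriv \<phi> (t*y) * y) (at t)"
      by (intro DERIV_chain2[of \<phi>] sm_diff[OF assms(1) ty]) (auto intro!: derivative_eq_intros)
    then show "((\<lambda>t. \<phi> (t*y)) has_vector_derivative deriv \<phi> (t*y) * y) (at t within {0..1})"
      by (auto simp: has_real_derivative_iff_has_vector_derivative intro: has_vector_derivative_at_within)
  qed simp
  have "(\<lambda>t. deriv \<phi> (t*y)) integrable_on {0..1}"
    using cont_scale[OF sm_cont[OF sm_deriv[OF assms(1)]] assms(2)] by (auto intro!: integrable_continuous_real)
  then have "((\<lambda>t. deriv \<phi> (t*y)) has_integral integral {0..1} (\<lambda>t. deriv \<phi> (t*y))) {0..1}"
    by (rule integrable_integral)
  then have "((\<lambda>t. deriv \<phi> (t*y) * y) has_integral (integral {0..1} (\<lambda>t. deriv \<phi> (t*y)) * y)) {0..1}"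
    by (rule has_integral_mult_left)
  moreover have "J 0 (deriv \<phi>) y = integral {0..1} (\<lambda>t. deriv \<phi> (t*y))" by (simp add: J_def)
  ultimately have "((\<lambda>t. deriv \<phi> (t*y) * y) has_integral (J 0 (deriv \<phi>) y * y)) {0..1}" by simp
  with ftc have "\<phi> (1*y) - \<phi> (0*y) = J 0 (deriv \<phi>) y * y" using has_integral_unique by blast
  then show ?thesis by (simp add: mult.commute)
qed

lemma J0_zero: "J 0 \<phi> 0 = \<phi> 0"
proof -
  have "J 0 \<phi> 0 = integral {0..1} (\<lambda>t::real. \<phi> 0)" unfolding J_def by simp
  also have "\<dots> = \<phi> 0" by simp
  finally show ?thesis .
qed

lemma sm_antideriv:
  assumes "sm {-R<..<R} k" "0 < r" "r < R"
  shows "sm {-r<..<r} (\<lambda>y. integral {-r..y} k)"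
    "\<And>y. y \<in> {-r<..<r} \<Longrightarrow> ((\<lambda>y. integral {-r..y} k) has_real_derivative k y) (at y)"
proof -
  have sub: "{-r..r} \<subseteq> {-R<..<R}" using assms(2,3) by auto
  have c: "continuous_on {-r..r} k" using continuous_on_subset[OF sm_cont[OF assms(1)] sub] .
  show d: "((\<lambda>y. integral {-r..y} k) has_real_derivative k y) (at y)" if "y \<in> {-r<..<r}" for y
  proof -
    have "((\<lambda>y. integral {-r..y} k) has_real_derivative k y) (at y within {-r..r})"
      using that by (intro integral_has_real_derivative[OF c]) auto
    moreover have "at y within {-r..r} = at y"
      using that by (intro at_within_interior) auto
    ultimately show ?thesis by simp
  qed
  have ks: "sm {-r<..<r} k" using assms by (intro sm_subset[OF _ assms(1)]) auto
  show "sm {-r<..<r} (\<lambda>y. integral {-r..y} k)"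
    unfolding sm_def
  proof
    fix n
    show "D1 n {-r<..<r} (\<lambda>y. integral {-r..y} k)"
    proof (cases n)
      case (Suc m)
      then show ?thesis using ks d D1_SucI[of "{-r<..<r}" "\<lambda>y. integral {-r..y} k" k m] unfolding sm_def by simp
    qed simp
  qed
qed

lemma sm_inv:
  assumes I: "open I" and sg: "sm I g" and nz: "\<forall>x\<in>I. deriv g x \<noteq> 0" and inj: "inj_on g I"
    and W: "open (g ` I)"
  shows "sm (g ` I) (inv_into I g)"
    "\<And>w. w \<in> g ` I \<Longrightarrow> (inv_into I g has_real_derivative inverse (deriv g (inv_into I g w))) (at w)"
proof -
  let ?G = "inv_into I g"
  have GI: "?G ` (g ` I) \<subseteq> I" by (auto simp: inv_into_into)
  show dG: "(?G has_real_derivative inverse (deriv g (?G w))) (at w)" if "w \<in> g ` I" for w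
  proof -
    have x: "?G w \<in> I" using that by (auto simp: inv_into_into)
    have gx: "g (?G w) = w" using that by (simp add: f_inv_into_f)
    have "(?G has_derivative (*) (inverse (deriv g (?G w)))) (at (g (?G w)))"
    proof (rule has_derivative_inverse_strong[OF I x])
      show "continuous_on I g" using sm_cont[OF sg] .
      show "\<And>x. x \<in> I \<Longrightarrow> ?G (g x) = x" using inj by (simp add: inv_into_f_f)
      show "(g has_derivative (*) (deriv g (?G w))) (at (?G w))"
        using sm_diff[OF sg x] by (simp add: has_field_derivative_def)
      show "(*) (deriv g (?G w)) \<circ> (*) (inverse (deriv g (?G w))) = id"
        using nz x by (auto simp: fun_eq_iff)
    qed
    then show ?thesis using gx by (simp add: has_field_derivative_def mult.commute)
  qed
  have "D1 n (g ` I) ?G" for n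
  proof (induction n)
    case (Suc n)
    have d: "D1 n I (deriv g)" using sm_deriv[OF sg] unfolding sm_def by blast
    have "D1 n (g ` I) (\<lambda>w. deriv g (?G w))" by (rule D1_comp[OF W I GI d Suc])
    moreover have "(\<lambda>w. deriv g (?G w)) ` (g ` I) \<subseteq> -{0}" using nz GI inj by (auto simp: inv_into_f_f)
    ultimately have "D1 n (g ` I) (\<lambda>w. inverse (deriv g (?G w)))"
      using D1_comp[OF W open_Compl[OF closed_singleton] _ D1_inverse] by auto
    then show ?case using dG by (intro D1_SucI[OF W]) auto
  qed simp
  then show "sm (g ` I) ?G" unfolding sm_def by blast
qed

definition lin2 :: "(real \<Rightarrow> real) \<Rightarrow> (real \<Rightarrow> real) \<Rightarrow> real \<times> real \<Rightarrow> real" where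
  "lin2 A B p = fst p * A (snd p) + B (snd p)"

lemma lin2_deriv:
  assumes dA: "(A has_real_derivative A') (at (snd p))" and dB: "(B has_real_derivative B') (at (snd p))"
  shows "(lin2 A B has_derivative (\<lambda>v. fst v * A (snd p) + snd v * (fst p * A' + B'))) (at p)"
proof -
  have s: "(snd has_derivative snd) (at p)" by (rule has_derivative_snd[OF has_derivative_ident])
  have f: "(fst has_derivative fst) (at p)" by (rule has_derivative_fst[OF has_derivative_ident])
  have a: "((\<lambda>p. A (snd p)) has_derivative (\<lambda>v. A' * snd v)) (at p)"
    using has_derivative_compose[OF s dA[unfolded has_field_derivative_def]] by simp
  have b: "((\<lambda>p. B (snd p)) has_derivative (\<lambda>v. B' * snd v)) (at p)"
    using has_derivative_compose[OF s dB[unfolded has_field_derivative_def]] by simp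
  have "((\<lambda>p. fst p * A (snd p) + B (snd p)) has_derivative
     (\<lambda>v. fst p * (A' * snd v) + fst v * A (snd p) + B' * snd v)) (at p)"
    by (rule has_derivative_add[OF has_derivative_mult[OF f a] b])
  then show ?thesis unfolding lin2_def
    by (rule has_derivative_eq_rhs) (auto simp: fun_eq_iff algebra_simps)
qed

lemma lin2_cont:
  assumes "sm U0 A" "sm U0 B"
  shows "continuous_on (UNIV \<times> U0) (lin2 A B)"
proof -
  have "isCont (lin2 A B) p" if "p \<in> UNIV \<times> U0" for p
    using lin2_deriv[OF sm_diff[OF assms(1)] sm_diff[OF assms(2)], of p] that
    by (auto dest: has_derivative_continuous simp: mem_Times_iff)
  then show ?thesis by (simp add: continuous_at_imp_continuous_on)
qed

lemma Ck_lin2: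
  assumes U0: "open U0"
  shows "sm U0 A \<Longrightarrow> sm U0 B \<Longrightarrow> Ck_on n (UNIV \<times> U0) (lin2 A B)"
proof (induction n arbitrary: A B)
  case 0
  then show ?case using lin2_cont by simp
next
  case (Suc n)
  have U2: "open (UNIV \<times> U0)" using U0 by (simp add: open_Times)
  have d: "(lin2 A B has_derivative (\<lambda>v. fst v * A (snd p) + snd v * (fst p * deriv A (snd p) + deriv B (snd p)))) (at p)"
    if "p \<in> UNIV \<times> U0" for p
    using lin2_deriv[OF sm_diff[OF Suc.prems(1)] sm_diff[OF Suc.prems(2)], of p] that by (auto simp: mem_Times_iff)
  have "Ck_on n (UNIV \<times> U0) (\<lambda>p. frechet_derivative (lin2 A B) (at p) v)" for v
  proof -
    have sA: "sm U0 (\<lambda>y. snd v * deriv A y)" using sm_cmult[OF U0 sm_deriv[OF Suc.prems(1)]] .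
    have sB: "sm U0 (\<lambda>y. fst v * A y + snd v * deriv B y)"
      using sm_add[OF U0 sm_cmult[OF U0 Suc.prems(1)] sm_cmult[OF U0 sm_deriv[OF Suc.prems(2)]]] .
    have "Ck_on n (UNIV \<times> U0) (lin2 (\<lambda>y. snd v * deriv A y) (\<lambda>y. fst v * A y + snd v * deriv B y))"
      using Suc.IH[OF sA sB] .
    moreover have "\<forall>p\<in>UNIV \<times> U0. lin2 (\<lambda>y. snd v * deriv A y) (\<lambda>y. fst v * A y + snd v * deriv B y) p
        = frechet_derivative (lin2 A B) (at p) v"
      using frechet_eq_of_has[OF d] by (auto simp: lin2_def algebra_simps)
    ultimately show ?thesis by (rule Ck_on_cong[OF U2])
  qed
  moreover have "\<forall>p\<in>UNIV \<times> U0. lin2 A B differentiable (at p)" using d unfolding differentiable_def by blast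
  ultimately show ?case by simp
qed

lemma smooth_pair_lin2:
  assumes "open U0" "sm U0 A1" "sm U0 B1" "sm U0 A2" "sm U0 B2"
  shows "smooth_on (UNIV \<times> U0) (\<lambda>p. (lin2 A1 B1 p, lin2 A2 B2 p))"
  unfolding smooth_on_def
  using Ck_on_pair[OF open_Times[OF open_UNIV assms(1)] Ck_lin2[OF assms(1,2,3)] Ck_lin2[OF assms(1,4,5)]]
  by blast

lemma pair_lin2_deriv:
  assumes "(A1 has_real_derivative A1') (at (snd p))" "(B1 has_real_derivative B1') (at (snd p))"
    "(A2 has_real_derivative A2') (at (snd p))" "(B2 has_real_derivative B2') (at (snd p))"
  shows "frechet_derivative (\<lambda>p. (lin2 A1 B1 p, lin2 A2 B2 p)) (at p) =
     (\<lambda>v. (fst v * A1 (snd p) + snd v * (fst p * A1' + B1'), fst v * A2 (snd p) + snd v * (fst p * A2' + B2')))"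
  by (rule frechet_eq_of_has, rule has_derivative_Pair[OF lin2_deriv[OF assms(1,2)] lin2_deriv[OF assms(3,4)]])

lemma alg_push:
  fixes G F F1 G2 a x :: real
  assumes "G \<noteq> 0" "F * G2 = a*G - G*F1"
  shows "(-x*F1) * inverse G + F * (x * (-(G2 * inverse (G^Suc (Suc 0)))) + 0) = -a * (x * inverse G + 0)"
proof -
  have "F * (x * (-(G2 * inverse (G^Suc (Suc 0))))) = - x * (F * G2) / G^2"
    by (simp add: field_simps power2_eq_square)
  also have "\<dots> = - x * (a*G - G*F1) / G^2" using assms(2) by simp
  also have "\<dots> = - x * a / G + x * F1 / G" using assms(1) by (simp add: field_simps power2_eq_square)
  finally show ?thesis using assms(1) by (simp add: field_simps)
qed

lemma inj_of_deriv_nz: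
  fixes g :: "real \<Rightarrow> real"
  assumes d: "\<And>x. x \<in> {c<..<e} \<Longrightarrow> (g has_real_derivative g' x) (at x)"
    and nz: "\<And>x. x \<in> {c<..<e} \<Longrightarrow> g' x \<noteq> 0"
  shows "inj_on g {c<..<e}"
proof -
  have *: "False" if xy: "x < y" "x \<in> {c<..<e}" "y \<in> {c<..<e}" "g x = g y" for x y
  proof -
    have sub: "{x..y} \<subseteq> {c<..<e}" using xy by auto
    have "\<forall>z\<in>{x..y}. isCont g z" using sub d DERIV_isCont by blast
    then have "continuous_on {x..y} g" by (rule continuous_at_imp_continuous_on)
    moreover have "g differentiable (at z)" if "x < z" "z < y" for z
    proof -
      have "z \<in> {x..y}" using that by auto
      then have "z \<in> {c<..<e}" using sub by blast
      then show ?thesis using d real_differentiable_def by blast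
    qed
    ultimately obtain z where z: "x < z" "z < y" "(g has_real_derivative 0) (at z)"
      using Rolle[OF xy(1) xy(4)] by blast
    then have "z \<in> {x..y}" by auto
    then have zI: "z \<in> {c<..<e}" using sub by blast
    have "g' z = 0" using DERIV_unique[OF d[OF zI] z(3)] .
    then show False using nz[OF zI] by simp
  qed
  show ?thesis unfolding inj_on_def
    by (metis * linorder_neqE_linordered_idom)
qed

lemma eig:
  fixes a :: real
  shows "lin_eigenvalues (\<lambda>v. (- a * fst v, a * snd v)) = {- complex_of_real a, complex_of_real a}"
proof
  show "lin_eigenvalues (\<lambda>v. (- a * fst v, a * snd v)) \<subseteq> {- complex_of_real a, complex_of_real a}"
  proof
    fix \<mu> assume "\<mu> \<in> lin_eigenvalues (\<lambda>v. (- a * fst v, a * snd v))"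
    then obtain v1 v2 where v: "(v1, v2) \<noteq> (0, 0)" "- complex_of_real a * v1 = \<mu> * v1"
      "complex_of_real a * v2 = \<mu> * v2"
      by (auto simp: lin_eigenvalues_def)
    show "\<mu> \<in> {- complex_of_real a, complex_of_real a}"
    proof (cases "v1 = 0")
      case True
      then have "v2 \<noteq> 0" using v by auto
      then show ?thesis using v(3) by auto
    next
      case False
      have "(\<mu> + complex_of_real a) * v1 = \<mu> * v1 + complex_of_real a * v1" by (simp add: algebra_simps)
      also have "\<dots> = 0" using v(2) by (metis add.commute add_uminus_conv_diff diff_self minus_mult_left)
      finally have "(\<mu> + complex_of_real a) * v1 = 0" .
      then have "\<mu> + complex_of_real a = 0" using False by simp
      then have "\<mu> = - complex_of_real a" by (simp add: eq_neg_iff_add_eq_0)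
      then show ?thesis by simp
    qed
  qed
next
  show "{- complex_of_real a, complex_of_real a} \<subseteq> lin_eigenvalues (\<lambda>v. (- a * fst v, a * snd v))"
  proof -
    have "- complex_of_real a \<in> lin_eigenvalues (\<lambda>v. (- a * fst v, a * snd v))"
      unfolding lin_eigenvalues_def by (rule CollectI, rule exI[of _ 1], rule exI[of _ 0]) simp
    moreover have "complex_of_real a \<in> lin_eigenvalues (\<lambda>v. (- a * fst v, a * snd v))"
      unfolding lin_eigenvalues_def by (rule CollectI, rule exI[of _ 0], rule exI[of _ 1]) simp
    ultimately show ?thesis by auto
  qed
qed

lemma part3:
  fixes f :: "real \<Rightarrow> real" and U :: "real set"
  assumes "open U" and "0 \<in> U" and "smooth_on U f" and "f 0 = 0" and a0: "deriv f 0 \<noteq> 0"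
  shows "\<exists>V W (\<psi> :: real \<times> real \<Rightarrow> real \<times> real) \<phi>.
            open V \<and> open W \<and> (0, 0) \<in> V \<and> V \<subseteq> {p. snd p \<in> U} \<and>
            \<psi> (0, 0) = (0, 0) \<and> \<psi> ` V = W \<and>
            smooth_on V \<psi> \<and> smooth_on W \<phi> \<and>
            (\<forall>p\<in>V. \<phi> (\<psi> p) = p) \<and> (\<forall>q\<in>W. \<psi> (\<phi> q) = q) \<and>
            (\<forall>p\<in>V. \<forall>v. fst (\<psi> p) * snd (frechet_derivative \<psi> (at p) v) = fst p * snd v) \<and>
            (\<forall>p\<in>V. frechet_derivative \<psi> (at p) (liouville_field f p)
                     = (- deriv f 0 * fst (\<psi> p), deriv f 0 * snd (\<psi> p)))"
proof -
  define a where "a = deriv f 0"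
  have a0': "a \<noteq> 0" using a0 a_def by simp
  obtain R where R: "0 < R" "ball 0 R \<subseteq> U" using assms(1,2) openE by blast
  let ?IR = "{-R<..<R}"
  have IRU: "?IR \<subseteq> U" using R(2) by (simp add: ball_eq_greaterThanLessThan)
  have oIR: "open ?IR" by simp
  have sf: "sm ?IR f" using sm_subset[OF IRU smooth_sm[OF assms(1,3)]] .
  have sdf: "sm ?IR (deriv f)" using sm_deriv[OF sf] .
  define h where "h = J 0 (deriv f)"
  have sh: "sm ?IR h" unfolding h_def by (rule sm_J[OF sdf])
  have fh: "f y = y * h y" if "y \<in> ?IR" for y
    using hadamard[OF sf that] assms(4) unfolding h_def by simp
  have h0: "h 0 = a" unfolding h_def a_def by (rule J0_zero)
  define \<phi>1 where "\<phi>1 = (\<lambda>y. a - h y)"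
  have s\<phi>1: "sm ?IR \<phi>1" unfolding \<phi>1_def by (rule sm_diffop[OF oIR sm_const[OF oIR] sh])
  define q where "q = J 0 (deriv \<phi>1)"
  have sq: "sm ?IR q" unfolding q_def by (rule sm_J[OF sm_deriv[OF s\<phi>1]])
  have hq: "a - h y = y * q y" if "y \<in> ?IR" for y
    using hadamard[OF s\<phi>1 that] h0 unfolding q_def \<phi>1_def by simp
  have "0 \<in> ?IR" using R by simp
  then have "isCont h 0" using sm_diff[OF sh] DERIV_isCont by blast
  then obtain r0 where r0: "r0 > 0" "\<And>y. dist 0 y < r0 \<Longrightarrow> h y \<noteq> 0"
    using continuous_at_avoid[of 0 h 0] h0 a0' by auto
  define s where "s = min r0 R"
  define r where "r = s / 2"
  have s: "0 < s" "s \<le> r0" "s \<le> R" using r0 R unfolding s_def by auto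
  have r: "0 < r" "r < s" using s unfolding r_def by auto
  have I2sub: "{-s<..<s} \<subseteq> ?IR" using s by auto
  have o2: "open {-s<..<s}" by simp
  have hnz: "\<forall>y\<in>{-s<..<s}. h y \<noteq> 0"
  proof
    fix y assume "y \<in> {-s<..<s}"
    then have "dist 0 y < r0" using s by (auto simp: dist_real_def)
    then show "h y \<noteq> 0" using r0 by blast
  qed
  define k where "k = (\<lambda>y. q y * inverse (h y))"
  have sk: "sm {-s<..<s} k" unfolding k_def
    by (rule sm_mult[OF o2 sm_subset[OF I2sub sq] sm_inverse[OF o2 sm_subset[OF I2sub sh] hnz]])
  define K where "K = (\<lambda>y. integral {-r..y} k)"
  let ?I = "{-r<..<r}"
  have oI: "open ?I" by simp
  have sK: "sm ?I K" unfolding K_def using sm_antideriv(1)[OF sk r] .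
  have dK: "(K has_real_derivative k y) (at y)" if "y \<in> ?I" for y
    unfolding K_def using sm_antideriv(2)[OF sk r that] .
  have II2: "?I \<subseteq> {-s<..<s}" using r by auto
  have IIR: "?I \<subseteq> ?IR" using II2 I2sub by blast
  define E where "E = (\<lambda>y. exp (K y))"
  define g where "g = (\<lambda>y. y * E y)"
  have sE: "sm ?I E" unfolding E_def by (rule sm_exp[OF oI sK])
  have sg: "sm ?I g" unfolding g_def by (rule sm_mult[OF oI sm_id[OF oI] sE])
  have dg: "(g has_real_derivative E y * (1 + y * k y)) (at y)" if "y \<in> ?I" for y
  proof -
    have dE: "(E has_real_derivative exp (K y) * k y) (at y)"
      unfolding E_def by (rule DERIV_chain2[OF DERIV_exp dK[OF that]])
    have "(g has_real_derivative 1 * E y + exp (K y) * k y * y) (at y)"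
      unfolding g_def by (rule DERIV_mult[OF DERIV_ident dE])
    then show ?thesis by (simp add: E_def algebra_simps)
  qed
  have g'eq: "deriv g y = E y * (1 + y * k y)" if "y \<in> ?I" for y
    using DERIV_imp_deriv[OF dg[OF that]] .
  have key: "(1 + y * k y) * h y = a" if "y \<in> ?I" for y
  proof -
    have yI2: "y \<in> {-s<..<s}" using that II2 by blast
    have "(1 + y * k y) * h y = h y + y * q y * (inverse (h y) * h y)" by (simp add: k_def algebra_simps)
    also have "\<dots> = h y + y * q y" using hnz yI2 by simp
    also have "\<dots> = a" using hq[of y] that IIR by auto
    finally show ?thesis .
  qed
  have g'nz: "deriv g y \<noteq> 0" if "y \<in> ?I" for y
  proof -
    have "1 + y * k y \<noteq> 0" using key[OF that] a0' by auto
    moreover have "E y \<noteq> 0" by (simp add: E_def)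
    ultimately show ?thesis using g'eq[OF that] by simp
  qed
  have ODE: "deriv g y * f y = a * g y" if "y \<in> ?I" for y
  proof -
    have "deriv g y * f y = E y * y * ((1 + y * k y) * h y)"
      using g'eq[OF that] fh[of y] that IIR by (auto simp: algebra_simps)
    also have "\<dots> = a * g y" using key[OF that] by (simp add: g_def algebra_simps)
    finally show ?thesis .
  qed
  have sg': "sm ?I (deriv g)" using sm_deriv[OF sg] .
  have sfI: "sm ?I f" using sm_subset[OF IIR sf] .
  have ODE2: "deriv (deriv g) y * f y + deriv f y * deriv g y = a * deriv g y" if "y \<in> ?I" for y
  proof -
    have d1: "((\<lambda>y. deriv g y * f y) has_real_derivative deriv (deriv g) y * f y + deriv f y * deriv g y) (at y)"
      by (rule DERIV_mult[OF sm_diff[OF sg' that] sm_diff[OF sfI that]])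
    have d2: "((\<lambda>y. a * g y) has_real_derivative a * deriv g y) (at y)"
      by (rule DERIV_cmult[OF sm_diff[OF sg that]])
    have eqon: "\<forall>x\<in>?I. deriv g x * f x = a * g x" using ODE by blast
    have "((\<lambda>y. a * g y) has_real_derivative deriv (deriv g) y * f y + deriv f y * deriv g y) (at y)"
      by (rule deriv_eq_on(1)[OF oI that eqon d1])
    from DERIV_unique[OF this d2] show ?thesis .
  qed
  have inj: "inj_on g ?I"
  proof (rule inj_of_deriv_nz[of "-r" r g "\<lambda>y. E y * (1 + y * k y)"])
    fix y assume y: "y \<in> {-r<..<r}"
    show "(g has_real_derivative E y * (1 + y * k y)) (at y)" using dg[OF y] .
    show "E y * (1 + y * k y) \<noteq> 0" using g'nz[OF y] g'eq[OF y] by simp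
  qed
  define W0 where "W0 = g ` ?I"
  have oW0: "open W0" unfolding W0_def by (rule invariance_of_domain[OF sm_cont[OF sg] oI inj])
  define G where "G = inv_into ?I g"
  have g'nzI: "\<forall>x\<in>?I. deriv g x \<noteq> 0" using g'nz by blast
  have sG: "sm W0 G" unfolding G_def W0_def using sm_inv(1)[OF oI sg g'nzI inj] oW0 W0_def by blast
  have GI: "G ` W0 \<subseteq> ?I" unfolding G_def W0_def using inv_into_into[of _ g ?I] by blast
  have Gg: "G (g y) = y" if "y \<in> ?I" for y unfolding G_def using inj that by (simp add: inv_into_f_f)
  have gG: "g (G w) = w" if "w \<in> W0" for w unfolding G_def using that W0_def by (simp add: f_inv_into_f)
  have gW0: "g y \<in> W0" if "y \<in> ?I" for y using that W0_def by blast
  define \<psi> where "\<psi> = (\<lambda>p. (lin2 (\<lambda>y. inverse (deriv g y)) (\<lambda>y. 0) p, lin2 (\<lambda>y. 0) g p))"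
  define \<phi> where "\<phi> = (\<lambda>q. (lin2 (\<lambda>v. deriv g (G v)) (\<lambda>v. 0) q, lin2 (\<lambda>v. 0) G q))"
  have \<psi>eq: "\<psi> p = (fst p * inverse (deriv g (snd p)), g (snd p))" for p
    by (simp add: \<psi>_def lin2_def)
  have \<phi>eq: "\<phi> q = (fst q * deriv g (G (snd q)), G (snd q))" for q
    by (simp add: \<phi>_def lin2_def)
  have \<phi>\<psi>: "\<forall>p\<in>UNIV \<times> ?I. \<phi> (\<psi> p) = p"
  proof
    fix p :: "real \<times> real" assume p: "p \<in> UNIV \<times> ?I"
    then have y: "snd p \<in> ?I" by auto
    show "\<phi> (\<psi> p) = p" using Gg[OF y] g'nz[OF y] by (simp add: \<phi>eq \<psi>eq prod_eq_iff)
  qed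
  have \<psi>\<phi>: "\<forall>q\<in>UNIV \<times> W0. \<psi> (\<phi> q) = q"
  proof
    fix q :: "real \<times> real" assume q: "q \<in> UNIV \<times> W0"
    then have v: "snd q \<in> W0" by auto
    have "G (snd q) \<in> ?I" using GI v by blast
    then show "\<psi> (\<phi> q) = q" using gG[OF v] g'nz by (simp add: \<phi>eq \<psi>eq prod_eq_iff)
  qed
  have \<phi>W: "\<phi> q \<in> UNIV \<times> ?I" if "q \<in> UNIV \<times> W0" for q :: "real \<times> real"
    using that GI by (auto simp: \<phi>eq mem_Times_iff)
  have img: "\<psi> ` (UNIV \<times> ?I) = UNIV \<times> W0"
  proof
    show "\<psi> ` (UNIV \<times> ?I) \<subseteq> UNIV \<times> W0" using gW0 by (auto simp: \<psi>eq mem_Times_iff)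
    show "UNIV \<times> W0 \<subseteq> \<psi> ` (UNIV \<times> ?I)"
    proof
      fix q :: "real \<times> real" assume q: "q \<in> UNIV \<times> W0"
      then have "q = \<psi> (\<phi> q)" using \<psi>\<phi> by auto
      then show "q \<in> \<psi> ` (UNIV \<times> ?I)" by (rule image_eqI[OF _ \<phi>W[OF q]])
    qed
  qed
  have D\<psi>: "frechet_derivative \<psi> (at p) = (\<lambda>v.
      (fst v * inverse (deriv g (snd p)) + snd v * (fst p * (- (deriv (deriv g) (snd p) * inverse (deriv g (snd p) ^ Suc (Suc 0)))) + 0),
       fst v * 0 + snd v * (fst p * 0 + deriv g (snd p))))"
    if "p \<in> UNIV \<times> ?I" for p
  proof -
    have y: "snd p \<in> ?I" using that by auto
    show ?thesis unfolding \<psi>_def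
      by (rule pair_lin2_deriv[OF DERIV_inverse_fun[OF sm_diff[OF sg' y] g'nz[OF y]] DERIV_const DERIV_const sm_diff[OF sg y]])
  qed
  show ?thesis
  proof (rule exI[of _ "UNIV \<times> ?I"], rule exI[of _ "UNIV \<times> W0"], rule exI[of _ \<psi>], rule exI[of _ \<phi>],
      intro conjI)
    show "open (UNIV \<times> ?I)" by (simp add: open_Times)
    show "open (UNIV \<times> W0)" using oW0 by (simp add: open_Times)
    show "(0, 0) \<in> UNIV \<times> ?I" using r by auto
    show "UNIV \<times> ?I \<subseteq> {p. snd p \<in> U}" using IIR IRU by auto
    show "\<psi> (0, 0) = (0, 0)" by (simp add: \<psi>eq g_def)
    show "\<psi> ` (UNIV \<times> ?I) = UNIV \<times> W0" by (rule img)
    show "smooth_on (UNIV \<times> ?I) \<psi>" unfolding \<psi>_def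
      by (rule smooth_pair_lin2[OF oI sm_inverse[OF oI sg' g'nzI] sm_const[OF oI] sm_const[OF oI] sg])
    show "smooth_on (UNIV \<times> W0) \<phi>" unfolding \<phi>_def
      by (rule smooth_pair_lin2[OF oW0 sm_comp[OF oW0 oI GI sg' sG] sm_const[OF oW0] sm_const[OF oW0] sG])
    show "\<forall>p\<in>UNIV \<times> ?I. \<phi> (\<psi> p) = p" by (rule \<phi>\<psi>)
    show "\<forall>q\<in>UNIV \<times> W0. \<psi> (\<phi> q) = q" by (rule \<psi>\<phi>)
    show "\<forall>p\<in>UNIV \<times> ?I. \<forall>v. fst (\<psi> p) * snd (frechet_derivative \<psi> (at p) v) = fst p * snd v"
    proof (intro ballI allI)
      fix p :: "real \<times> real" and v :: "real \<times> real" assume p: "p \<in> UNIV \<times> ?I"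
      then have y: "snd p \<in> ?I" by auto
      show "fst (\<psi> p) * snd (frechet_derivative \<psi> (at p) v) = fst p * snd v"
        using g'nz[OF y] by (simp add: D\<psi>[OF p] \<psi>eq)
    qed
    show "\<forall>p\<in>UNIV \<times> ?I. frechet_derivative \<psi> (at p) (liouville_field f p)
                     = (- deriv f 0 * fst (\<psi> p), deriv f 0 * snd (\<psi> p))"
    proof
      fix p :: "real \<times> real" assume p: "p \<in> UNIV \<times> ?I"
      then have y: "snd p \<in> ?I" by auto
      have e1: "f (snd p) * deriv (deriv g) (snd p) = a * deriv g (snd p) - deriv g (snd p) * deriv f (snd p)"
        using ODE2[OF y] by (simp add: algebra_simps)
      have c1: "(- fst p * deriv f (snd p)) * inverse (deriv g (snd p)) +
          f (snd p) * (fst p * (- (deriv (deriv g) (snd p) * inverse (deriv g (snd p) ^ Suc (Suc 0)))) + 0)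
          = - a * (fst p * inverse (deriv g (snd p)) + 0)"
        by (rule alg_push[OF g'nz[OF y] e1])
      have c2: "- fst p * deriv f (snd p) * 0 + f (snd p) * (fst p * 0 + deriv g (snd p)) = a * g (snd p)"
        using ODE[OF y] by (simp add: algebra_simps)
      show "frechet_derivative \<psi> (at p) (liouville_field f p) = (- deriv f 0 * fst (\<psi> p), deriv f 0 * snd (\<psi> p))"
        using c1 c2 unfolding D\<psi>[OF p] liouville_field_def \<psi>eq a_def[symmetric] by simp
    qed
  qed
qed

theorem mainTheorem6:
  fixes f :: "real \<Rightarrow> real" and U :: "real set"
  assumes "open U" and "0 \<in> U" and "smooth_on U f" and "f 0 = 0"
  shows "lin_eigenvalues (frechet_derivative (liouville_field f) (at (0, 0)))
           = {- complex_of_real (deriv f 0), complex_of_real (deriv f 0)}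
     \<and> (hyperbolic_zero (liouville_field f) (0, 0) \<longleftrightarrow> deriv f 0 \<noteq> 0)
     \<and> (deriv f 0 \<noteq> 0 \<longrightarrow>
         (\<exists>V W (\<psi> :: real \<times> real \<Rightarrow> real \<times> real) \<phi>.
            open V \<and> open W \<and> (0, 0) \<in> V \<and> V \<subseteq> {p. snd p \<in> U} \<and>
            \<psi> (0, 0) = (0, 0) \<and> \<psi> ` V = W \<and>
            smooth_on V \<psi> \<and> smooth_on W \<phi> \<and>
            (\<forall>p\<in>V. \<phi> (\<psi> p) = p) \<and> (\<forall>q\<in>W. \<psi> (\<phi> q) = q) \<and>
            (\<forall>p\<in>V. \<forall>v. fst (\<psi> p) * snd (frechet_derivative \<psi> (at p) v) = fst p * snd v) \<and>
            (\<forall>p\<in>V. frechet_derivative \<psi> (at p) (liouville_field f p)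
                     = (- deriv f 0 * fst (\<psi> p), deriv f 0 * snd (\<psi> p)))))"
proof -
  define a where "a = deriv f 0"
  obtain R where R: "0 < R" "ball 0 R \<subseteq> U" using assms(1,2) openE by blast
  let ?IR = "{-R<..<R}"
  have IRU: "?IR \<subseteq> U" using R(2) by (simp add: ball_eq_greaterThanLessThan)
  have sf: "sm ?IR f" using sm_subset[OF IRU smooth_sm[OF assms(1,3)]] .
  have sdf: "sm ?IR (deriv f)" using sm_deriv[OF sf] .
  have I0: "snd (0::real, 0::real) \<in> ?IR" using R by simp
  have LF: "liouville_field f = (\<lambda>p. (lin2 (\<lambda>y. - deriv f y) (\<lambda>y. 0) p, lin2 (\<lambda>y. 0) f p))"
    by (auto simp: fun_eq_iff liouville_field_def lin2_def)
  have dA: "((\<lambda>y. - deriv f y) has_real_derivative - deriv (deriv f) (snd (0::real, 0::real))) (at (snd (0::real, 0::real)))"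
    by (rule DERIV_minus[OF sm_diff[OF sdf I0]])
  have dF: "(f has_real_derivative deriv f (snd (0::real, 0::real))) (at (snd (0::real, 0::real)))"
    by (rule sm_diff[OF sf I0])
  have hd: "(liouville_field f has_derivative (\<lambda>v.
      (fst v * (- deriv f (snd (0::real,0::real))) + snd v * (fst (0::real,0::real) * (- deriv (deriv f) (snd (0::real, 0::real))) + 0),
       fst v * 0 + snd v * (fst (0::real,0::real) * 0 + deriv f (snd (0::real, 0::real)))))) (at (0, 0))"
    unfolding LF by (rule has_derivative_Pair[OF lin2_deriv[OF dA DERIV_const] lin2_deriv[OF DERIV_const dF]])
  have DX: "frechet_derivative (liouville_field f) (at (0, 0)) = (\<lambda>v. (- a * fst v, a * snd v))"
    using frechet_eq_of_has[OF hd] by (simp add: a_def fun_eq_iff)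
  have dX: "liouville_field f differentiable (at (0, 0))" using hd by (auto simp: differentiable_def)
  have P1: "lin_eigenvalues (frechet_derivative (liouville_field f) (at (0, 0)))
           = {- complex_of_real (deriv f 0), complex_of_real (deriv f 0)}"
    unfolding DX a_def by (rule eig)
  have X0: "liouville_field f (0, 0) = (0, 0)" using assms(4) by (simp add: liouville_field_def)
  have P2: "hyperbolic_zero (liouville_field f) (0, 0) \<longleftrightarrow> deriv f 0 \<noteq> 0"
    unfolding hyperbolic_zero_def P1 using X0 dX by auto
  show ?thesis using P1 P2 part3[OF assms] by blast
qed

end
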